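(* Let $V$ be a Lie triple system over a field of characteristic $0$, $U(V)$ its universal enveloping algebra, and $A=U(V)/I$ a quotient of $U(V)$ by a two-sided ideal $I$ (elements of $V$ are identified with their images in $A$). If $a\in V$ satisfies $[L_a,L_b]=0$ as operators on $A$ for all $b\in V$, then $a\in {\rm Z}(A)$.
   Context: A Lie triple system (L.t.s.) is a vector space $V$ with trilinear product $[\cdot,\cdot,\cdot]$ satisfying $[a,a,b]=0$, $[a,b,c]+[b,c,a]+[c,a,b]=0$, $[x,y,[a,b,c]]=[[x,y,a],b,c]+[a,[x,y,b],c]+[a,b,[x,y,c]]$. Its universal enveloping algebra $U(V)$ (in the sense of Pérez-Izquierdo, $V$ viewed as a Bol algebra with zero binary bracket) is a unital non-associative bialgebra generated as a unital algebra by $V\subseteq U(V)$ ($V$ = primitive elements), satisfying $\sum a_{(1)}(y(a_{(2)}z))=\sum (a_{(1)}(ya_{(2)}))z$; in particular $(a,y,z)=-(y,a,z)$ for $a\in V$, $y,z\in U(V)$, where $(x,y,z)=(xy)z-x(yz)$, $ab=ba$ and $a(bc)-b(ac)=[a,b,c]$ for $a,b,c\in V$. $L_x$ is left multiplication by $x$. The centre ${\rm Z}(A)$ is the set of elements commuting with every element of $A$ and lying in the left, middle and right associative nuclei of $A$. *)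

theory Defs
  imports Complex_Main
begin

definition trilinear ::
  "('k::field \<Rightarrow> 'v::ab_group_add \<Rightarrow> 'v) \<Rightarrow> ('v \<Rightarrow> 'v \<Rightarrow> 'v \<Rightarrow> 'v) \<Rightarrow> bool" where
  "trilinear s T \<longleftrightarrow>
     (\<forall>y z. Vector_Spaces.linear s s (\<lambda>x. T x y z)) \<and>
     (\<forall>x z. Vector_Spaces.linear s s (\<lambda>y. T x y z)) \<and>
     (\<forall>x y. Vector_Spaces.linear s s (\<lambda>z. T x y z))"

definition lie_triple_system ::
  "('k::field \<Rightarrow> 'v::ab_group_add \<Rightarrow> 'v) \<Rightarrow> ('v \<Rightarrow> 'v \<Rightarrow> 'v \<Rightarrow> 'v) \<Rightarrow> bool" where
  "lie_triple_system s T \<longleftrightarrow>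
     vector_space s \<and> trilinear s T \<and>
     (\<forall>a b. T a a b = 0) \<and>
     (\<forall>a b c. T a b c + T b c a + T c a b = 0) \<and>
     (\<forall>x y a b c. T x y (T a b c) = T (T x y a) b c + T a (T x y b) c + T a b (T x y c))"

definition unital_algebra ::
  "('k::field \<Rightarrow> 'a::ab_group_add \<Rightarrow> 'a) \<Rightarrow> ('a \<Rightarrow> 'a \<Rightarrow> 'a) \<Rightarrow> 'a \<Rightarrow> bool" where
  "unital_algebra s m one \<longleftrightarrow>
     vector_space s \<and>
     (\<forall>y. Vector_Spaces.linear s s (\<lambda>x. m x y)) \<and> (\<forall>x. Vector_Spaces.linear s s (\<lambda>y. m x y)) \<and>
     (\<forall>x. m one x = x \<and> m x one = x)"

inductive_set gen_subalg ::
  "('k::field \<Rightarrow> 'a::ab_group_add \<Rightarrow> 'a) \<Rightarrow> ('a \<Rightarrow> 'a \<Rightarrow> 'a) \<Rightarrow> 'a \<Rightarrow> 'a set \<Rightarrow> 'a set"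
  for s m one S where
  gen_one: "one \<in> gen_subalg s m one S"
| gen_base: "x \<in> S \<Longrightarrow> x \<in> gen_subalg s m one S"
| gen_zero: "0 \<in> gen_subalg s m one S"
| gen_add: "x \<in> gen_subalg s m one S \<Longrightarrow> y \<in> gen_subalg s m one S \<Longrightarrow> x + y \<in> gen_subalg s m one S"
| gen_scale: "x \<in> gen_subalg s m one S \<Longrightarrow> s c x \<in> gen_subalg s m one S"
| gen_mult: "x \<in> gen_subalg s m one S \<Longrightarrow> y \<in> gen_subalg s m one S \<Longrightarrow> m x y \<in> gen_subalg s m one S"

definition assoc :: "('a::ab_group_add \<Rightarrow> 'a \<Rightarrow> 'a) \<Rightarrow> 'a \<Rightarrow> 'a \<Rightarrow> 'a \<Rightarrow> 'a" where
  "assoc m x y z = m (m x y) z - m x (m y z)"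

definition centre :: "('a::ab_group_add \<Rightarrow> 'a \<Rightarrow> 'a) \<Rightarrow> 'a set" where
  "centre m = {x. (\<forall>y. m x y = m y x) \<and>
      (\<forall>y z. assoc m x y z = 0 \<and> assoc m y x z = 0 \<and> assoc m y z x = 0)}"

text \<open>(A, iota) is a quotient of the universal enveloping algebra U(V) of the
  Lie triple system V (Perez-Izquierdo), iota being the composite V -> U(V) -> A.
  U(V) is the free unital nonassociative algebra on V modulo the ideal generated
  by ab - ba, (a,x,y) + (x,a,y), a(bc) - b(ac) - [a,b,c] (a,b,c in V); hence the
  quotients of U(V) by two-sided ideals are, up to isomorphism, exactly the unital
  algebras generated by the image of a linear map iota satisfying these relations.\<close>
definition quotient_of_UV ::
  "('k::field \<Rightarrow> 'v::ab_group_add \<Rightarrow> 'v) \<Rightarrow> ('v \<Rightarrow> 'v \<Rightarrow> 'v \<Rightarrow> 'v) \<Rightarrow>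
   ('k \<Rightarrow> 'a::ab_group_add \<Rightarrow> 'a) \<Rightarrow> ('a \<Rightarrow> 'a \<Rightarrow> 'a) \<Rightarrow> 'a \<Rightarrow> ('v \<Rightarrow> 'a) \<Rightarrow> bool" where
  "quotient_of_UV sV T sA m one iota \<longleftrightarrow>
     lie_triple_system sV T \<and> unital_algebra sA m one \<and> Vector_Spaces.linear sV sA iota \<and>
     gen_subalg sA m one (range iota) = UNIV \<and>
     (\<forall>a b. m (iota a) (iota b) = m (iota b) (iota a)) \<and>
     (\<forall>a y z. assoc m (iota a) y z = - assoc m y (iota a) z) \<and>
     (\<forall>a b c. m (iota a) (m (iota b) (iota c)) - m (iota b) (m (iota a) (iota c))
              = iota (T a b c))"

end

theory Submission imports Defs begin

lemma aux: fixes P :: "'a::ab_group_add"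
  assumes "P + Q = R + S" "R + R = A1 + A2" "S + S = A3 + A4" "Q + Q = B1 + B2"
  shows "A1 + A2 + A3 + A4 = P + P + B1 + B2"
proof -
  have a2: "A2 = R + R - A1" using assms(2) by (simp add: algebra_simps)
  have a4: "A4 = S + S - A3" using assms(3) by (simp add: algebra_simps)
  have b2: "B2 = Q + Q - B1" using assms(4) by (simp add: algebra_simps)
  have p: "P = R + S - Q" using assms(1) by (simp add: algebra_simps)
  show ?thesis unfolding a2 a4 b2 p by (simp add: algebra_simps)
qed

lemma aux2: fixes X1 :: "'a::ab_group_add"
  assumes "X1 + X2 + X3 + X4 = P + P + P' + Q" "Y1 + X3 + X2 + Y4 = P' + P' + P + Q" "P = P' + W"
  shows "X1 - Y1 = Y4 - X4 + W"
proof -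
  have x1: "X1 = P + P + P' + Q - X2 - X3 - X4" using assms(1) by (simp add: algebra_simps)
  have y1: "Y1 = P' + P' + P + Q - X3 - X2 - Y4" using assms(2) by (simp add: algebra_simps)
  show ?thesis unfolding x1 y1 assms(3) by (simp add: algebra_simps)
qed

lemma aux4: fixes A :: "'a::ab_group_add" shows "A - B = - (C - D) \<Longrightarrow> A + C = B + D"
  by (simp add: algebra_simps)

locale quv =
  fixes sA :: "'k::field_char_0 \<Rightarrow> 'a::ab_group_add \<Rightarrow> 'a"
    and m :: "'a \<Rightarrow> 'a \<Rightarrow> 'a" and one :: 'a and \<iota> :: "'v \<Rightarrow> 'a"
    and T :: "'v \<Rightarrow> 'v \<Rightarrow> 'v \<Rightarrow> 'v"
  assumes vs: "vector_space sA"
    and linl: "\<And>y. Vector_Spaces.linear sA sA (\<lambda>x. m x y)"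
    and linr: "\<And>x. Vector_Spaces.linear sA sA (\<lambda>y. m x y)"
    and unl: "\<And>x. m one x = x" and unr: "\<And>x. m x one = x"
    and comm: "\<And>a b. m (\<iota> a) (\<iota> b) = m (\<iota> b) (\<iota> a)"
    and E1: "\<And>c y z. m (m (\<iota> c) y) z + m (m y (\<iota> c)) z = m (\<iota> c) (m y z) + m y (m (\<iota> c) z)"
    and LT: "\<And>a b c. m (\<iota> a) (m (\<iota> b) (\<iota> c)) - m (\<iota> b) (m (\<iota> a) (\<iota> c)) = \<iota> (T a b c)"
begin

lemma M: "module sA" using vs module_iff_vector_space by blast

lemma addl: "m (x + y) z = m x z + m y z"
proof - interpret l: Vector_Spaces.linear sA sA "\<lambda>x. m x z" by (rule linl) show ?thesis by (rule l.add) qed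
lemma diffl: "m (x - y) z = m x z - m y z"
proof - interpret l: Vector_Spaces.linear sA sA "\<lambda>x. m x z" by (rule linl) show ?thesis by (rule l.diff) qed
lemma zerol[simp]: "m 0 z = 0"
proof - interpret l: Vector_Spaces.linear sA sA "\<lambda>x. m x z" by (rule linl) show ?thesis by (rule l.zero) qed
lemma scalel: "m (sA k x) z = sA k (m x z)"
proof - interpret l: Vector_Spaces.linear sA sA "\<lambda>x. m x z" by (rule linl) show ?thesis by (rule l.scale) qed
lemma addr: "m z (x + y) = m z x + m z y"
proof - interpret l: Vector_Spaces.linear sA sA "\<lambda>x. m z x" by (rule linr) show ?thesis by (rule l.add) qed
lemma diffr: "m z (x - y) = m z x - m z y"
proof - interpret l: Vector_Spaces.linear sA sA "\<lambda>x. m z x" by (rule linr) show ?thesis by (rule l.diff) qed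
lemma zeror[simp]: "m z 0 = 0"
proof - interpret l: Vector_Spaces.linear sA sA "\<lambda>x. m z x" by (rule linr) show ?thesis by (rule l.zero) qed
lemma scaler: "m z (sA k x) = sA k (m z x)"
proof - interpret l: Vector_Spaces.linear sA sA "\<lambda>x. m z x" by (rule linr) show ?thesis by (rule l.scale) qed

lemma halfeq: fixes x :: 'a shows "sA (1/2) (x + x) = x"
proof -
  have "sA (1/2) (x + x) = sA (1/2) x + sA (1/2) x" by (rule module.scale_right_distrib[OF M])
  also have "\<dots> = sA (1/2 + 1/2) x" by (rule module.scale_left_distrib[OF M, symmetric])
  also have "\<dots> = x" using module.scale_one[OF M] by simp
  finally show ?thesis .
qed

lemma dbl_cancel: fixes x :: 'a assumes "x + x = y + y" shows "x = y"
proof -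
  have "sA (1/2) (x + x) = sA (1/2) (y + y)" using assms by simp
  thus ?thesis by (simp add: halfeq)
qed

lemma sym2: "m (\<iota> d) (m (\<iota> e) y) + m (\<iota> e) (m (\<iota> d) y) = m (m (\<iota> d) (\<iota> e)) y + m (m (\<iota> d) (\<iota> e)) y"
  using E1[of d "\<iota> e" y] comm[of e d] by simp

lemma EQc: "m (\<iota> c) (m (\<iota> d) (m (\<iota> e) x)) + m (\<iota> c) (m (\<iota> e) (m (\<iota> d) x))
   + m (\<iota> d) (m (\<iota> e) (m (\<iota> c) x)) + m (\<iota> e) (m (\<iota> d) (m (\<iota> c) x))
  = m (m (\<iota> c) (m (\<iota> d) (\<iota> e))) x + m (m (\<iota> c) (m (\<iota> d) (\<iota> e))) x
   + m (m (\<iota> d) (m (\<iota> e) (\<iota> c))) x + m (m (\<iota> e) (m (\<iota> d) (\<iota> c))) x"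
proof -
  let ?de = "m (\<iota> d) (\<iota> e)"
  have h1: "m (m (\<iota> c) ?de) x + m (m ?de (\<iota> c)) x = m (\<iota> c) (m ?de x) + m ?de (m (\<iota> c) x)"
    by (rule E1)
  have h2: "m (\<iota> c) (m ?de x) + m (\<iota> c) (m ?de x) = m (\<iota> c) (m (\<iota> d) (m (\<iota> e) x)) + m (\<iota> c) (m (\<iota> e) (m (\<iota> d) x))"
    by (simp add: addr[symmetric] sym2)
  have h3: "m ?de (m (\<iota> c) x) + m ?de (m (\<iota> c) x) = m (\<iota> d) (m (\<iota> e) (m (\<iota> c) x)) + m (\<iota> e) (m (\<iota> d) (m (\<iota> c) x))"
    by (simp add: sym2)
  have h4: "m (m ?de (\<iota> c)) x + m (m ?de (\<iota> c)) x = m (m (\<iota> d) (m (\<iota> e) (\<iota> c))) x + m (m (\<iota> e) (m (\<iota> d) (\<iota> c))) x"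
    by (simp add: addl[symmetric] sym2)
  show ?thesis using aux[OF h1 h2 h3 h4] by simp
qed

lemma T3: "m (\<iota> c) (m (\<iota> d) (m (\<iota> e) x)) - m (\<iota> d) (m (\<iota> c) (m (\<iota> e) x))
   = m (\<iota> e) (m (\<iota> c) (m (\<iota> d) x) - m (\<iota> d) (m (\<iota> c) x)) + m (\<iota> (T c d e)) x"
proof -
  have eqc: "m (\<iota> c) (m (\<iota> d) (m (\<iota> e) x)) + m (\<iota> c) (m (\<iota> e) (m (\<iota> d) x))
   + m (\<iota> d) (m (\<iota> e) (m (\<iota> c) x)) + m (\<iota> e) (m (\<iota> d) (m (\<iota> c) x))
  = m (m (\<iota> c) (m (\<iota> d) (\<iota> e))) x + m (m (\<iota> c) (m (\<iota> d) (\<iota> e))) x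
   + m (m (\<iota> d) (m (\<iota> c) (\<iota> e))) x + m (m (\<iota> e) (m (\<iota> d) (\<iota> c))) x"
    using EQc[of c d e x] by (simp only: comm[of e c])
  have eqd: "m (\<iota> d) (m (\<iota> c) (m (\<iota> e) x)) + m (\<iota> d) (m (\<iota> e) (m (\<iota> c) x))
   + m (\<iota> c) (m (\<iota> e) (m (\<iota> d) x)) + m (\<iota> e) (m (\<iota> c) (m (\<iota> d) x))
  = m (m (\<iota> d) (m (\<iota> c) (\<iota> e))) x + m (m (\<iota> d) (m (\<iota> c) (\<iota> e))) x
   + m (m (\<iota> c) (m (\<iota> d) (\<iota> e))) x + m (m (\<iota> e) (m (\<iota> d) (\<iota> c))) x"
    using EQc[of d c e x] by (simp only: comm[of e d] comm[of c d])
  have lt: "m (m (\<iota> c) (m (\<iota> d) (\<iota> e))) x = m (m (\<iota> d) (m (\<iota> c) (\<iota> e))) x + m (\<iota> (T c d e)) x"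
  proof -
    have "m (m (\<iota> c) (m (\<iota> d) (\<iota> e))) x - m (m (\<iota> d) (m (\<iota> c) (\<iota> e))) x = m (\<iota> (T c d e)) x"
      by (simp only: diffl[symmetric] LT)
    thus ?thesis by (simp add: algebra_simps)
  qed
  show ?thesis unfolding diffr by (rule aux2[OF eqc eqd lt])
qed

inductive Rn :: "nat \<Rightarrow> 'a \<Rightarrow> bool" where
  R_one: "Rn n one"
| R_zero: "Rn n 0"
| R_add: "Rn n x \<Longrightarrow> Rn n y \<Longrightarrow> Rn n (x + y)"
| R_scale: "Rn n x \<Longrightarrow> Rn n (sA k x)"
| R_let: "Rn n x \<Longrightarrow> Rn (Suc n) (m (\<iota> c) x)"

lemma neg_scale: "- x = sA (-1) x"
  using module.scale_minus_left[OF M, of 1 x] module.scale_one[OF M] by simp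

lemma R_neg: "Rn n x \<Longrightarrow> Rn n (- x)"
  unfolding neg_scale by (rule R_scale)
lemma R_diff: "Rn n x \<Longrightarrow> Rn n y \<Longrightarrow> Rn n (x - y)"
  by (metis R_add R_neg diff_conv_add_uminus)
lemma R_half: "Rn n (x + x) \<Longrightarrow> Rn n x"
  by (metis R_scale halfeq)
lemma R_Suc: "Rn n x \<Longrightarrow> Rn (Suc n) x"
  by (induction rule: Rn.induct) (auto intro: Rn.intros)
lemma R_mono: assumes "Rn n x" "n \<le> n'" shows "Rn n' x"
  using assms(2) by (induction n' rule: dec_induct) (auto intro: R_Suc assms(1))

lemma EL: "Rn j u \<Longrightarrow> Rn j (m (\<iota> c) (m (\<iota> d) u) - m (\<iota> d) (m (\<iota> c) u))"
proof (induction rule: Rn.induct)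
  case (R_one n) thus ?case using comm[of c d] by (simp add: unr Rn.R_zero)
next
  case (R_zero n) thus ?case by (simp add: Rn.R_zero)
next
  case (R_add n x y)
  have "m (\<iota> c) (m (\<iota> d) (x + y)) - m (\<iota> d) (m (\<iota> c) (x + y)) =
    (m (\<iota> c) (m (\<iota> d) x) - m (\<iota> d) (m (\<iota> c) x)) + (m (\<iota> c) (m (\<iota> d) y) - m (\<iota> d) (m (\<iota> c) y))"
    by (simp add: addr algebra_simps)
  thus ?case using R_add by (simp add: Rn.R_add)
next
  case (R_scale n x k)
  have "m (\<iota> c) (m (\<iota> d) (sA k x)) - m (\<iota> d) (m (\<iota> c) (sA k x)) =
    sA k (m (\<iota> c) (m (\<iota> d) x) - m (\<iota> d) (m (\<iota> c) x))"
    by (simp add: scaler module.scale_right_diff_distrib[OF M])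
  thus ?case using R_scale by (simp add: Rn.R_scale)
next
  case (R_let n x e)
  have "Rn (Suc n) (m (\<iota> e) (m (\<iota> c) (m (\<iota> d) x) - m (\<iota> d) (m (\<iota> c) x)) + m (\<iota> (T c d e)) x)"
    using R_let by (intro Rn.R_add Rn.R_let)
  thus ?case by (simp only: T3)
qed

definition Q :: "nat \<Rightarrow> 'a \<Rightarrow> bool" where
  "Q n w \<longleftrightarrow> (\<forall>j u. Rn j u \<longrightarrow> Rn (n + j) (m w u)) \<and>
     (\<forall>c j u. Rn j u \<longrightarrow> Rn (n + j) (m w (m (\<iota> c) u) - m (\<iota> c) (m w u)))"

lemma Q_one: "Q n one"
  unfolding Q_def
proof (intro conjI allI impI)
  fix j u assume u: "Rn j u"
  show "Rn (n + j) (m one u)" unfolding unl by (rule R_mono[OF u]) simp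
next
  fix c j u assume u: "Rn j u"
  show "Rn (n + j) (m one (m (\<iota> c) u) - m (\<iota> c) (m one u))" by (simp add: unl Rn.R_zero)
qed

lemma Q_zero: "Q n 0"
  unfolding Q_def by (simp add: Rn.R_zero)

lemma Q_add: assumes "Q n x" "Q n y" shows "Q n (x + y)"
  unfolding Q_def
proof (intro conjI allI impI)
  fix j u assume u: "Rn j u"
  have "Rn (n + j) (m x u)" "Rn (n + j) (m y u)" using assms u unfolding Q_def by blast+
  thus "Rn (n + j) (m (x + y) u)" unfolding addl by (rule Rn.R_add)
next
  fix c j u assume u: "Rn j u"
  have eqA: "m (x + y) (m (\<iota> c) u) - m (\<iota> c) (m (x + y) u) =
     (m x (m (\<iota> c) u) - m (\<iota> c) (m x u)) + (m y (m (\<iota> c) u) - m (\<iota> c) (m y u))"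
    by (simp add: addl addr algebra_simps)
  thus "Rn (n + j) (m (x + y) (m (\<iota> c) u) - m (\<iota> c) (m (x + y) u))"
  proof -
    have "Rn (n + j) (m x (m (\<iota> c) u) - m (\<iota> c) (m x u))" "Rn (n + j) (m y (m (\<iota> c) u) - m (\<iota> c) (m y u))"
      using assms u unfolding Q_def by blast+
    thus ?thesis unfolding eqA by (rule Rn.R_add)
  qed
qed

lemma Q_scale: assumes "Q n x" shows "Q n (sA k x)"
  unfolding Q_def
proof (intro conjI allI impI)
  fix j u assume u: "Rn j u"
  have "Rn (n + j) (m x u)" using assms u unfolding Q_def by blast
  thus "Rn (n + j) (m (sA k x) u)" unfolding scalel by (rule Rn.R_scale)
next
  fix c j u assume u: "Rn j u"
  have eqS: "m (sA k x) (m (\<iota> c) u) - m (\<iota> c) (m (sA k x) u) =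
     sA k (m x (m (\<iota> c) u) - m (\<iota> c) (m x u))"
    by (simp add: scalel scaler module.scale_right_diff_distrib[OF M])
  thus "Rn (n + j) (m (sA k x) (m (\<iota> c) u) - m (\<iota> c) (m (sA k x) u))"
  proof -
    have "Rn (n + j) (m x (m (\<iota> c) u) - m (\<iota> c) (m x u))"
      using assms u unfolding Q_def by blast
    thus ?thesis unfolding eqS by (rule Rn.R_scale)
  qed
qed

lemma aux3: fixes A :: "'b::ab_group_add" shows "A + B = C + D \<Longrightarrow> B = A + R \<Longrightarrow> A + A = C + D - R"
  by (simp add: algebra_simps)

lemma Kid: assumes "m w' (\<iota> c') = m (\<iota> c') w' + r"
  shows "m (m (\<iota> c') w') x + m (m (\<iota> c') w') x = m (\<iota> c') (m w' x) + m w' (m (\<iota> c') x) - m r x"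
proof -
  have h: "m (m w' (\<iota> c')) x = m (m (\<iota> c') w') x + m r x" unfolding assms by (rule addl)
  show ?thesis by (rule aux3[OF E1[of c' w' x] h])
qed

lemma Q_let: assumes H: "\<And>w. Rn n w \<Longrightarrow> Q n w" and w': "Rn n w'"
  shows "Q (Suc n) (m (\<iota> c') w')"
proof -
  have Qw': "Q n w'" using H w' .
  define r where "r = m w' (\<iota> c') - m (\<iota> c') w'"
  have "Rn (n + 0) (m w' (m (\<iota> c') one) - m (\<iota> c') (m w' one))"
    using Qw' Rn.R_one[of 0] unfolding Q_def by blast
  hence Rr: "Rn n r" by (simp add: unr r_def)
  have Qr: "Q n r" using H Rr .
  have req: "m w' (\<iota> c') = m (\<iota> c') w' + r" by (simp add: r_def)
  note K = Kid[OF req]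
  show ?thesis unfolding Q_def
  proof (intro conjI allI impI)
    fix j u assume u: "Rn j u"
    have a: "Rn (Suc n + j) (m (\<iota> c') (m w' u))"
      using Qw' u unfolding Q_def by (simp add: Rn.R_let)
    have "Rn (n + Suc j) (m w' (m (\<iota> c') u))"
      using Qw' Rn.R_let[OF u] unfolding Q_def by blast
    hence b: "Rn (Suc n + j) (m w' (m (\<iota> c') u))" by simp
    have "Rn (n + j) (m r u)" using Qr u unfolding Q_def by blast
    hence c: "Rn (Suc n + j) (m r u)" by (rule R_mono) simp
    have "Rn (Suc n + j) (m (m (\<iota> c') w') u + m (m (\<iota> c') w') u)"
      unfolding K by (intro R_diff Rn.R_add a b c)
    thus "Rn (Suc n + j) (m (m (\<iota> c') w') u)" by (rule R_half)
  next
    fix c j u assume u: "Rn j u"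
    define p where "p = m w' u"
    define e1 where "e1 = m w' (m (\<iota> c) u) - m (\<iota> c) p"
    define e2 where "e2 = m w' (m (\<iota> c') (m (\<iota> c) u)) - m (\<iota> c') (m w' (m (\<iota> c) u))"
    define e3 where "e3 = m w' (m (\<iota> c') u) - m (\<iota> c') p"
    have e1eq: "m w' (m (\<iota> c) u) = m (\<iota> c) p + e1" by (simp add: e1_def)
    have e2eq: "m w' (m (\<iota> c') (m (\<iota> c) u)) = m (\<iota> c') (m w' (m (\<iota> c) u)) + e2" by (simp add: e2_def)
    have e3eq: "m w' (m (\<iota> c') u) = m (\<iota> c') p + e3" by (simp add: e3_def)
    have Rp: "Rn (n + j) p" using Qw' u unfolding Q_def p_def by blast
    have Re1: "Rn (n + j) e1" using Qw' u unfolding Q_def e1_def p_def by blast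
    have "Rn (n + Suc j) e2" using Qw' Rn.R_let[OF u, of c] unfolding Q_def e2_def by blast
    hence Re2: "Rn (Suc n + j) e2" by simp
    have Re3: "Rn (n + j) e3" using Qw' u unfolding Q_def e3_def p_def by blast
    have "Rn (n + Suc j) (m r (m (\<iota> c) u))" using Qr Rn.R_let[OF u, of c] unfolding Q_def by blast
    hence Rrcu: "Rn (Suc n + j) (m r (m (\<iota> c) u))" by simp
    have Rru: "Rn (n + j) (m r u)" using Qr u unfolding Q_def by blast
    have Rcom: "Rn (Suc n + j) (m (\<iota> c') (m (\<iota> c) p) - m (\<iota> c) (m (\<iota> c') p))"
      using EL[OF Rp, of c' c] by (rule R_mono) simp
    have A: "m (m (\<iota> c') w') (m (\<iota> c) u) + m (m (\<iota> c') w') (m (\<iota> c) u)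
      = m (\<iota> c') (m (\<iota> c) p) + m (\<iota> c') (m (\<iota> c) p) + m (\<iota> c') e1 + m (\<iota> c') e1 + e2
        - m r (m (\<iota> c) u)"
      unfolding K e2eq e1eq addr by (simp add: algebra_simps)
    have B: "m (m (\<iota> c') w') u + m (m (\<iota> c') w') u = m (\<iota> c') p + m (\<iota> c') p + e3 - m r u"
      unfolding K e3eq p_def by (simp add: algebra_simps)
    have CB: "m (\<iota> c) (m (m (\<iota> c') w') u) + m (\<iota> c) (m (m (\<iota> c') w') u)
       = m (\<iota> c) (m (\<iota> c') p) + m (\<iota> c) (m (\<iota> c') p) + m (\<iota> c) e3 - m (\<iota> c) (m r u)"
    proof -
      have "m (\<iota> c) (m (m (\<iota> c') w') u) + m (\<iota> c) (m (m (\<iota> c') w') u)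
         = m (\<iota> c) (m (m (\<iota> c') w') u + m (m (\<iota> c') w') u)" by (simp only: addr)
      also have "\<dots> = m (\<iota> c) (m (\<iota> c') p + m (\<iota> c') p + e3 - m r u)" by (simp only: B)
      also have "\<dots> = m (\<iota> c) (m (\<iota> c') p) + m (\<iota> c) (m (\<iota> c') p) + m (\<iota> c) e3 - m (\<iota> c) (m r u)"
        by (simp only: addr diffr)
      finally show ?thesis .
    qed
    let ?D = "m (m (\<iota> c') w') (m (\<iota> c) u) - m (\<iota> c) (m (m (\<iota> c') w') u)"
    have DD: "?D + ?D = (m (\<iota> c') (m (\<iota> c) p) - m (\<iota> c) (m (\<iota> c') p))
        + (m (\<iota> c') (m (\<iota> c) p) - m (\<iota> c) (m (\<iota> c') p))
        + m (\<iota> c') e1 + m (\<iota> c') e1 + e2 - m r (m (\<iota> c) u) - m (\<iota> c) e3 + m (\<iota> c) (m r u)"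
    proof -
      have h: "?D + ?D = (m (m (\<iota> c') w') (m (\<iota> c) u) + m (m (\<iota> c') w') (m (\<iota> c) u))
          - (m (\<iota> c) (m (m (\<iota> c') w') u) + m (\<iota> c) (m (m (\<iota> c') w') u))"
        by (simp add: algebra_simps)
      show ?thesis unfolding h A CB by (simp add: algebra_simps)
    qed
    have Re1': "Rn (Suc n + j) (m (\<iota> c') e1)" using Rn.R_let[OF Re1] by simp
    have Rce3: "Rn (Suc n + j) (m (\<iota> c) e3)" using Rn.R_let[OF Re3] by simp
    have Rcru: "Rn (Suc n + j) (m (\<iota> c) (m r u))" using Rn.R_let[OF Rru] by simp
    have "Rn (Suc n + j) (?D + ?D)"
      unfolding DD
      by (rule Rn.R_add[OF R_diff[OF R_diff[OF Rn.R_add[OF Rn.R_add[OF Rn.R_add[OF Rn.R_add[OF Rcom Rcom] Re1'] Re1'] Re2] Rrcu] Rce3] Rcru])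
    thus "Rn (Suc n + j) ?D" by (rule R_half)
  qed
qed

lemma Q_all: "\<forall>w. Rn n w \<longrightarrow> Q n w"
proof (induction n)
  case 0
  have "Rn k w \<Longrightarrow> k = 0 \<Longrightarrow> Q k w" for k w
    by (induction rule: Rn.induct) (auto intro: Q_one Q_zero Q_add Q_scale)
  thus ?case by blast
next
  case (Suc n)
  have "Rn k w \<Longrightarrow> k = Suc n \<Longrightarrow> Q k w" for k w
  proof (induction rule: Rn.induct)
    case (R_let k x c) thus ?case using Suc.IH Q_let[of k x c] by auto
  qed (auto intro: Q_one Q_zero Q_add Q_scale)
  thus ?case by blast
qed

lemma R_mult: "Rn i x \<Longrightarrow> Rn j y \<Longrightarrow> Rn (i + j) (m x y)"
  using Q_all unfolding Q_def by blast

lemma gen_R: assumes gen: "gen_subalg sA m one (range \<iota>) = UNIV" shows "\<exists>k. Rn k y"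
proof -
  have "y \<in> gen_subalg sA m one (range \<iota>)" using gen by simp
  thus ?thesis
  proof (induction rule: gen_subalg.induct)
    case gen_one thus ?case by (blast intro: Rn.R_one)
  next
    case (gen_base x)
    then obtain b where "x = \<iota> b" by blast
    hence "x = m (\<iota> b) one" by (simp add: unr)
    thus ?case by (blast intro: Rn.R_let Rn.R_one)
  next
    case gen_zero thus ?case by (blast intro: Rn.R_zero)
  next
    case (gen_add x y)
    then obtain k l where "Rn k x" "Rn l y" by blast
    hence "Rn (max k l) x" "Rn (max k l) y" by (auto elim: R_mono)
    thus ?case by (blast intro: Rn.R_add)
  next
    case (gen_scale x c) thus ?case by (blast intro: Rn.R_scale)
  next
    case (gen_mult x y) thus ?case by (blast intro: R_mult)
  qed
qed

definition Cm :: "'v \<Rightarrow> 'a \<Rightarrow> bool" where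
  "Cm a w \<longleftrightarrow> (\<forall>z. m (\<iota> a) (m w z) = m w (m (\<iota> a) z))"

lemma C_one: "Cm a one" unfolding Cm_def by (simp add: unl)
lemma C_zero: "Cm a 0" unfolding Cm_def by simp
lemma C_add: "Cm a x \<Longrightarrow> Cm a y \<Longrightarrow> Cm a (x + y)" unfolding Cm_def by (simp add: addl addr)
lemma C_scale: "Cm a x \<Longrightarrow> Cm a (sA k x)" unfolding Cm_def by (simp add: scalel scaler)

lemma C_let: assumes hyp: "\<forall>b x. m (\<iota> a) (m (\<iota> b) x) = m (\<iota> b) (m (\<iota> a) x)"
  and H: "\<And>w. Rn n w \<Longrightarrow> Cm a w" and w': "Rn n w'"
  shows "Cm a (m (\<iota> c') w')"
  unfolding Cm_def
proof
  fix z
  have Qw': "Q n w'" using Q_all w' by blast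
  define r where "r = m w' (\<iota> c') - m (\<iota> c') w'"
  have "Rn (n + 0) (m w' (m (\<iota> c') one) - m (\<iota> c') (m w' one))"
    using Qw' Rn.R_one[of 0] unfolding Q_def by blast
  hence Rr: "Rn n r" by (simp add: unr r_def)
  have Cr: "Cm a r" using H Rr .
  have Cw': "Cm a w'" using H w' .
  have req: "m w' (\<iota> c') = m (\<iota> c') w' + r" by (simp add: r_def)
  note K = Kid[OF req]
  let ?A = "\<iota> a"
  have "m ?A (m (m (\<iota> c') w') z) + m ?A (m (m (\<iota> c') w') z)
      = m ?A (m (m (\<iota> c') w') z + m (m (\<iota> c') w') z)" by (simp only: addr)
  also have "\<dots> = m ?A (m (\<iota> c') (m w' z) + m w' (m (\<iota> c') z) - m r z)" by (simp only: K)
  also have "\<dots> = m ?A (m (\<iota> c') (m w' z)) + m ?A (m w' (m (\<iota> c') z)) - m ?A (m r z)"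
    by (simp only: addr diffr)
  also have "\<dots> = m (\<iota> c') (m w' (m ?A z)) + m w' (m (\<iota> c') (m ?A z)) - m r (m ?A z)"
    using hyp Cw' Cr unfolding Cm_def by simp
  also have "\<dots> = m (m (\<iota> c') w') (m ?A z) + m (m (\<iota> c') w') (m ?A z)" by (simp only: K)
  finally show "m ?A (m (m (\<iota> c') w') z) = m (m (\<iota> c') w') (m ?A z)" by (rule dbl_cancel)
qed

lemma C_all: assumes hyp: "\<forall>b x. m (\<iota> a) (m (\<iota> b) x) = m (\<iota> b) (m (\<iota> a) x)"
  shows "\<forall>w. Rn n w \<longrightarrow> Cm a w"
proof (induction n)
  case 0
  have "Rn k w \<Longrightarrow> k = 0 \<Longrightarrow> Cm a w" for k w
    by (induction rule: Rn.induct) (auto intro: C_one C_zero C_add C_scale)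
  thus ?case by blast
next
  case (Suc n)
  have "Rn k w \<Longrightarrow> k = Suc n \<Longrightarrow> Cm a w" for k w
  proof (induction rule: Rn.induct)
    case (R_let k x c) thus ?case using Suc.IH C_let[OF hyp, of k x c] by auto
  qed (auto intro: C_one C_zero C_add C_scale)
  thus ?case by blast
qed

end

theorem lemma2p8:
  fixes sV :: "'k::field_char_0 \<Rightarrow> 'v::ab_group_add \<Rightarrow> 'v"
    and T :: "'v \<Rightarrow> 'v \<Rightarrow> 'v \<Rightarrow> 'v"
    and sA :: "'k \<Rightarrow> 'a::ab_group_add \<Rightarrow> 'a"
    and m :: "'a \<Rightarrow> 'a \<Rightarrow> 'a" and one :: 'a and iota :: "'v \<Rightarrow> 'a"
    and a :: 'v
  assumes "quotient_of_UV sV T sA m one iota"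
    and "\<forall>b x. m (iota a) (m (iota b) x) = m (iota b) (m (iota a) x)"
  shows "iota a \<in> centre m"
proof -
  have qa: "lie_triple_system sV T \<and> unital_algebra sA m one \<and> Vector_Spaces.linear sV sA iota \<and>
     gen_subalg sA m one (range iota) = UNIV \<and>
     (\<forall>a b. m (iota a) (iota b) = m (iota b) (iota a)) \<and>
     (\<forall>a y z. assoc m (iota a) y z = - assoc m y (iota a) z) \<and>
     (\<forall>a b c. m (iota a) (m (iota b) (iota c)) - m (iota b) (m (iota a) (iota c))
              = iota (T a b c))" using assms(1) unfolding quotient_of_UV_def .
  have ua: "unital_algebra sA m one" using qa by (elim conjE) assumption
  have gen: "gen_subalg sA m one (range iota) = UNIV" using qa by (elim conjE) assumption
  have cm': "\<forall>a b. m (iota a) (iota b) = m (iota b) (iota a)" using qa by (elim conjE) assumption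
  have an': "\<forall>a y z. assoc m (iota a) y z = - assoc m y (iota a) z" using qa by (elim conjE) assumption
  have lt': "\<forall>a b c. m (iota a) (m (iota b) (iota c)) - m (iota b) (m (iota a) (iota c)) = iota (T a b c)"
    using qa by (elim conjE) assumption
  have cm: "\<And>a b. m (iota a) (iota b) = m (iota b) (iota a)" using cm' by blast
  have an: "\<And>a y z. assoc m (iota a) y z = - assoc m y (iota a) z" using an' by blast
  have lt: "\<And>a b c. m (iota a) (m (iota b) (iota c)) - m (iota b) (m (iota a) (iota c)) = iota (T a b c)"
    using lt' by blast
  have e1: "m (m (iota c) y) z + m (m y (iota c)) z = m (iota c) (m y z) + m y (m (iota c) z)" for c y z
    using an[of c y z] unfolding assoc_def by (rule aux4)
  have vs: "vector_space sA" and ll: "\<And>y. Vector_Spaces.linear sA sA (\<lambda>x. m x y)"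
    and lr: "\<And>x. Vector_Spaces.linear sA sA (\<lambda>y. m x y)"
    and ul: "\<And>x. m one x = x" and ur: "\<And>x. m x one = x"
  proof -
    have u: "vector_space sA \<and> (\<forall>y. Vector_Spaces.linear sA sA (\<lambda>x. m x y)) \<and>
      (\<forall>x. Vector_Spaces.linear sA sA (\<lambda>y. m x y)) \<and> (\<forall>x. m one x = x \<and> m x one = x)"
      using ua unfolding unital_algebra_def .
    show "vector_space sA" using u by (elim conjE) assumption
    show "\<And>y. Vector_Spaces.linear sA sA (\<lambda>x. m x y)" using u by (elim conjE allE) assumption
    show "\<And>x. Vector_Spaces.linear sA sA (\<lambda>y. m x y)" using u by (elim conjE allE) assumption
    show "\<And>x. m one x = x" using u by (elim conjE allE) assumption
    show "\<And>x. m x one = x" using u by (elim conjE allE) assumption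
  qed
  have qv: "quv sA m one iota T"
    unfolding quv_def
    apply (intro conjI allI)
    apply (rule vs)
    apply (rule ll)
    apply (rule lr)
    apply (rule ul)
    apply (rule ur)
    apply (rule cm)
    apply (rule e1)
    apply (rule lt)
    done
  interpret q: quv sA m one iota T by (rule qv)
  have C: "q.Cm a y" for y
  proof -
    obtain k where "q.Rn k y" using q.gen_R[OF gen] by blast
    thus ?thesis using q.C_all[OF assms(2)] by blast
  qed
  have L: "m (iota a) (m y z) = m y (m (iota a) z)" for y z using C unfolding q.Cm_def by blast
  have cmt: "m (iota a) y = m y (iota a)" for y using L[of y one] by (simp add: q.unr)
  have la: "m (m (iota a) y) z = m (iota a) (m y z)" for y z
  proof -
    have h1: "m (m y (iota a)) z = m (m (iota a) y) z" by (simp only: cmt)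
    have h2: "m y (m (iota a) z) = m (iota a) (m y z)" by (simp only: L)
    have "m (m (iota a) y) z + m (m (iota a) y) z = m (iota a) (m y z) + m (iota a) (m y z)"
      using e1[of a y z] unfolding h1 h2 .
    thus ?thesis by (rule q.dbl_cancel)
  qed
  have as1: "assoc m (iota a) y z = 0" for y z unfolding assoc_def la by simp
  have as2: "assoc m y (iota a) z = 0" for y z
  proof -
    have h1: "m (m y (iota a)) z = m (m (iota a) y) z" by (simp only: cmt)
    have h2: "m y (m (iota a) z) = m (iota a) (m y z)" by (simp only: L)
    show ?thesis unfolding assoc_def h1 h2 la by simp
  qed
  have as3: "assoc m y z (iota a) = 0" for y z
  proof -
    have h1: "m (m y z) (iota a) = m (iota a) (m y z)" by (simp only: cmt)
    have h2: "m z (iota a) = m (iota a) z" by (simp only: cmt)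
    show ?thesis unfolding assoc_def h1 h2 L by simp
  qed
  show ?thesis unfolding centre_def using cmt as1 as2 as3 by blast
qed

end
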